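(* Let $\mathcal{M}$ be a circular embedding of a connected graph $X$ with $n$ vertices and $s$ faces on a closed orientable surface. Let $U$ be its vertex-face transition matrix, $C$ its vertex-face incidence matrix, and $\widehat C=\widehat N^T\widehat M$ its normalized vertex-face incidence matrix. Then the $(-1)$-eigenspace of $U$ is \[\widehat M\ker(\widehat C)\oplus\widehat N\ker(\widehat C^T),\] and it has dimension $n+s-2\operatorname{rk}(C)$.
   Context: Setting. A circular embedding is a cellular embedding in which every face is bounded by a cycle. Arcs are ordered pairs $(u,v)$ with $\{u,v\}$ an edge, and $u$ is the tail. Consistent orientation. Fix an orientation of the face boundaries such that each edge shared by two faces receives opposite directions in them. Then every arc lies in exactly one facial walk. Matrices. - $M$ is the arc-face incidence matrix ($M_{(a,b),f}=1$ iff $(a,b)$ lies in the facial walk of $f$). - $N$ is the arc-tail incidence matrix ($N_{(a,b),u}=1$ iff $a=u$). - $\widehat M,\widehat N$ are these matrices with columns scaled to unit length. - $U=(2\widehat M\widehat M^T-I)(2\widehat N\widehat N^T-I)$ is the vertex-face transition matrix. - $C$ is the $n\times s$ matrix with $C_{u,f}=1$ iff $u$ lies on face $f$; equivalently $C=N^TM$. *)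

theory Defs
  imports "Jordan_Normal_Form.DL_Rank" "Jordan_Normal_Form.Matrix_Kernel"
begin

section \<open>Combinatorial model of an embedding on a closed orientable surface\<close>

text \<open>Vertices are 0,...,n-1. The graph is simple, given by a symmetric irreflexive
edge relation E. An embedding on a closed orientable surface is encoded (Heffter-Edmonds)
by a rotation system rho: for every vertex u, rho u is a cyclic permutation of the
neighbourhood of u. Faces are the orbits of the face permutation on arcs,
phi (u,v) = (v, rho v u); these orbits are the facial walks with a consistent orientation.\<close>

definition nbrs :: "(nat \<Rightarrow> nat \<Rightarrow> bool) \<Rightarrow> nat \<Rightarrow> nat set" where
  "nbrs E u = {v. E u v}"

definition simple_graph :: "nat \<Rightarrow> (nat \<Rightarrow> nat \<Rightarrow> bool) \<Rightarrow> bool" where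
  "simple_graph n E \<longleftrightarrow> (\<forall>u v. E u v \<longrightarrow> u < n \<and> v < n \<and> u \<noteq> v \<and> E v u)"

definition connected_graph :: "nat \<Rightarrow> (nat \<Rightarrow> nat \<Rightarrow> bool) \<Rightarrow> bool" where
  "connected_graph n E \<longleftrightarrow> (\<forall>u v. u < n \<longrightarrow> v < n \<longrightarrow> E\<^sup>*\<^sup>* u v)"

definition rotation_system :: "nat \<Rightarrow> (nat \<Rightarrow> nat \<Rightarrow> bool) \<Rightarrow> (nat \<Rightarrow> nat \<Rightarrow> nat) \<Rightarrow> bool" where
  "rotation_system n E rho \<longleftrightarrow>
     (\<forall>u < n. bij_betw (rho u) (nbrs E u) (nbrs E u) \<and>
        (\<forall>v \<in> nbrs E u. \<forall>w \<in> nbrs E u. \<exists>k. (rho u ^^ k) v = w))"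

definition face_perm :: "(nat \<Rightarrow> nat \<Rightarrow> nat) \<Rightarrow> nat \<times> nat \<Rightarrow> nat \<times> nat" where
  "face_perm rho a = (snd a, rho (snd a) (fst a))"

text \<open>The arcs, as a list (fixed enumeration of the rows of M and N).\<close>
definition arcs :: "nat \<Rightarrow> (nat \<Rightarrow> nat \<Rightarrow> bool) \<Rightarrow> (nat \<times> nat) list" where
  "arcs n E = filter (\<lambda>(u,v). E u v) (List.product [0..<n] [0..<n])"

text \<open>The face (facial walk) containing arc a, as its set of arcs.\<close>
definition face_of :: "(nat \<Rightarrow> nat \<Rightarrow> nat) \<Rightarrow> nat \<times> nat \<Rightarrow> (nat \<times> nat) set" where
  "face_of rho a = {(face_perm rho ^^ k) a | k. True}"

text \<open>The faces, as a duplicate-free list (fixed enumeration of the columns of M).\<close>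
definition faces :: "nat \<Rightarrow> (nat \<Rightarrow> nat \<Rightarrow> bool) \<Rightarrow> (nat \<Rightarrow> nat \<Rightarrow> nat) \<Rightarrow> (nat \<times> nat) set list" where
  "faces n E rho = remdups (map (face_of rho) (arcs n E))"

text \<open>Circular embedding of a connected simple graph: every face is bounded by a cycle,
i.e. its facial walk has length at least 3 and visits no vertex twice. A graph without
edges has a single face that is not bounded by a cycle, hence the requirement of an edge.\<close>
definition circular_embedding :: "nat \<Rightarrow> (nat \<Rightarrow> nat \<Rightarrow> bool) \<Rightarrow> (nat \<Rightarrow> nat \<Rightarrow> nat) \<Rightarrow> bool" where
  "circular_embedding n E rho \<longleftrightarrow>
     simple_graph n E \<and> connected_graph n E \<and> rotation_system n E rho \<and>
     (\<exists>u v. E u v) \<and>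
     (\<forall>a \<in> set (arcs n E). card (face_of rho a) \<ge> 3 \<and> inj_on fst (face_of rho a))"

section \<open>Matrices\<close>

text \<open>Arc-face incidence matrix M.\<close>
definition arc_face_mat :: "nat \<Rightarrow> (nat \<Rightarrow> nat \<Rightarrow> bool) \<Rightarrow> (nat \<Rightarrow> nat \<Rightarrow> nat) \<Rightarrow> real mat" where
  "arc_face_mat n E rho = mat (length (arcs n E)) (length (faces n E rho))
     (\<lambda>(i,j). if arcs n E ! i \<in> faces n E rho ! j then 1 else 0)"

text \<open>Arc-tail incidence matrix N.\<close>
definition arc_tail_mat :: "nat \<Rightarrow> (nat \<Rightarrow> nat \<Rightarrow> bool) \<Rightarrow> real mat" where
  "arc_tail_mat n E = mat (length (arcs n E)) n
     (\<lambda>(i,u). if fst (arcs n E ! i) = u then 1 else 0)"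

text \<open>Scale every column to unit Euclidean length.\<close>
definition normalize_cols :: "real mat \<Rightarrow> real mat" where
  "normalize_cols A = mat (dim_row A) (dim_col A)
     (\<lambda>(i,j). A $$ (i,j) / sqrt (\<Sum>k < dim_row A. (A $$ (k,j))\<^sup>2))"

text \<open>Vertex-face transition matrix U.\<close>
definition transition_mat :: "nat \<Rightarrow> (nat \<Rightarrow> nat \<Rightarrow> bool) \<Rightarrow> (nat \<Rightarrow> nat \<Rightarrow> nat) \<Rightarrow> real mat" where
  "transition_mat n E rho =
    (let Mh = normalize_cols (arc_face_mat n E rho); Nh = normalize_cols (arc_tail_mat n E);
         m = length (arcs n E)
     in (2 \<cdot>\<^sub>m (Mh * transpose_mat Mh) - 1\<^sub>m m) * (2 \<cdot>\<^sub>m (Nh * transpose_mat Nh) - 1\<^sub>m m))"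

text \<open>The (-1)-eigenspace of a square matrix.\<close>
definition eigenspace_mat :: "real mat \<Rightarrow> real \<Rightarrow> real vec set" where
  "eigenspace_mat A lam = {x \<in> carrier_vec (dim_row A). A *\<^sub>v x = lam \<cdot>\<^sub>v x}"

text \<open>Dimension of a subspace W of real^m.\<close>
definition subspace_dim :: "nat \<Rightarrow> real vec set \<Rightarrow> nat" where
  "subspace_dim m W = vectorspace.dim class_ring ((module_vec TYPE(real) m)\<lparr>carrier := W\<rparr>)"

definition image_of_set :: "real mat \<Rightarrow> real vec set \<Rightarrow> real vec set" where
  "image_of_set A W = (\<lambda>y. A *\<^sub>v y) ` W"

end

theory Submission
  imports Defs
begin

lemma mat_vec_zero:
  fixes A :: "'a :: semiring_0 mat"
  shows "A \<in> carrier_mat r k \<Longrightarrow> A *\<^sub>v 0\<^sub>v k = 0\<^sub>v r"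
  by (intro eq_vecI) auto

lemma vsubspaceI:
  fixes S :: "real vec set"
  assumes "S \<subseteq> carrier_vec k" "0\<^sub>v k \<in> S"
    "\<And>x y. x \<in> S \<Longrightarrow> y \<in> S \<Longrightarrow> x + y \<in> S"
    "\<And>c x. x \<in> S \<Longrightarrow> c \<cdot>\<^sub>v x \<in> S"
  shows "subspace class_ring S (module_vec TYPE(real) k)"
proof -
  interpret V: vec_space "TYPE(real)" k .
  show ?thesis
    unfolding subspace_def
    apply (intro conjI V.vectorspace_axioms submodule.intro)
    using assms V.module_axioms by auto
qed

lemma subspace_fin_dim:
  assumes S: "subspace class_ring S (module_vec TYPE(real) k)"
  shows "vectorspace.fin_dim class_ring ((module_vec TYPE(real) k)\<lparr>carrier := S\<rparr>)"
proof -
  interpret V: vec_space "TYPE(real)" k .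
  interpret SV: vectorspace class_ring "V.vs S" using V.subspace_is_vs[OF S] .
  have SC: "S \<subseteq> carrier_vec k" using S unfolding subspace_def submodule_def by auto
  have small: "finite A \<and> card A \<le> V.dim" if "A \<subseteq> carrier (V.vs S) \<and> SV.lin_indpt A" for A
  proof -
    have "A \<subseteq> S" using that by auto
    then have "V.lin_indpt A" using that V.span_li_not_depend(2)[of A S] S
      unfolding subspace_def by auto
    then show ?thesis using V.li_le_dim[OF V.fin_dim] \<open>A \<subseteq> S\<close> SC by auto
  qed
  have "\<exists>A. finite A \<and> maximal A (\<lambda>A. A \<subseteq> carrier (V.vs S) \<and> SV.lin_indpt A)"
    apply (rule maximal_exists[where N = "V.dim" and B = "{}"])
    using small apply blast
    by (auto simp: SV.lin_dep_def)
  then obtain A where A: "finite A" "maximal A (\<lambda>A. A \<subseteq> carrier (V.vs S) \<and> SV.lin_indpt A)" by blast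
  then have "SV.basis A" by (intro SV.max_li_is_basis)
  then show ?thesis unfolding SV.fin_dim_def SV.basis_def using A(1) by blast
qed

lemma dim_split:
  fixes P :: "real mat"
  assumes P: "P \<in> carrier_mat r k"
    and S: "subspace class_ring S (module_vec TYPE(real) k)"
  shows "subspace_dim k S = subspace_dim r ((\<lambda>x. P *\<^sub>v x) ` S) + subspace_dim k {x \<in> S. P *\<^sub>v x = 0\<^sub>v r}"
proof -
  interpret V: vec_space "TYPE(real)" k .
  interpret W: vec_space "TYPE(real)" r .
  interpret SV: vectorspace class_ring "V.vs S" using V.subspace_is_vs[OF S] .
  have SC: "S \<subseteq> carrier_vec k" using S unfolding subspace_def submodule_def by auto
  interpret L: linear_map class_ring "V.vs S" W.V "\<lambda>x. P *\<^sub>v x"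
    apply (intro linear_map.intro SV.vectorspace_axioms W.vectorspace_axioms mod_hom.intro
        SV.module_axioms W.module_axioms)
    unfolding mod_hom_axioms_def LinearCombinations.module_hom_def mem_Collect_eq Pi_def
    using SC P by (auto simp: mult_add_distrib_mat_vec mult_mat_vec module_vec_simps class_ring_simps subset_iff)
  have fd: "SV.fin_dim" using subspace_fin_dim[OF S] .
  have "vectorspace.dim class_ring (W.vs L.imT) + vectorspace.dim class_ring (SV.vs L.kerT) = SV.dim"
    using L.rank_nullity[OF fd] .
  moreover have "L.imT = (\<lambda>x. P *\<^sub>v x) ` S" unfolding L.im_def by simp
  moreover have "L.kerT = {x \<in> S. P *\<^sub>v x = 0\<^sub>v r}" unfolding L.ker_def by simp
  ultimately show ?thesis unfolding subspace_dim_def by simp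
qed

lemma dim_zero: "subspace_dim k {0\<^sub>v k} = 0"
proof -
  interpret V: vec_space "TYPE(real)" k .
  show ?thesis using V.dim_zero_vs V.span_empty unfolding subspace_dim_def by simp
qed

lemma dim_full: "subspace_dim k (carrier_vec k) = k"
proof -
  interpret V: vec_space "TYPE(real)" k .
  have "V.vs (carrier_vec k) = V.V" by (simp add: module_vec_def)
  then show ?thesis unfolding subspace_dim_def using V.dim_is_n by metis
qed

lemma kernel_subspace:
  fixes A :: "real mat"
  assumes A: "A \<in> carrier_mat nr nc"
  shows "subspace class_ring (mat_kernel A) (module_vec TYPE(real) nc)"
  apply (rule vsubspaceI)
  using A by (auto simp: mat_kernel_def mult_add_distrib_mat_vec mult_mat_vec)

lemma image_subspace:
  fixes P :: "real mat"
  assumes P: "P \<in> carrier_mat r k"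
    and S: "subspace class_ring S (module_vec TYPE(real) k)"
  shows "subspace class_ring ((\<lambda>x. P *\<^sub>v x) ` S) (module_vec TYPE(real) r)"
proof -
  have SC: "S \<subseteq> carrier_vec k" "0\<^sub>v k \<in> S" "\<And>x y. x \<in> S \<Longrightarrow> y \<in> S \<Longrightarrow> x + y \<in> S"
    "\<And>c x. x \<in> S \<Longrightarrow> c \<cdot>\<^sub>v x \<in> S"
    using S unfolding subspace_def submodule_def by (auto simp: module_vec_simps)
  show ?thesis
  proof (rule vsubspaceI)
    show "(*\<^sub>v) P ` S \<subseteq> carrier_vec r" using SC P by auto
    show "0\<^sub>v r \<in> (*\<^sub>v) P ` S" using SC P by (intro image_eqI[of _ _ "0\<^sub>v k"]) auto
    fix x y assume "x \<in> (*\<^sub>v) P ` S" "y \<in> (*\<^sub>v) P ` S"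
    then obtain a b where ab: "a \<in> S" "b \<in> S" "x = P *\<^sub>v a" "y = P *\<^sub>v b" by auto
    then show "x + y \<in> (*\<^sub>v) P ` S" using SC P
      by (intro image_eqI[of _ _ "a + b"]) (auto simp: mult_add_distrib_mat_vec subset_iff)
  next
    fix c x assume "x \<in> (*\<^sub>v) P ` S"
    then obtain a where ab: "a \<in> S" "x = P *\<^sub>v a" by auto
    then show "c \<cdot>\<^sub>v x \<in> (*\<^sub>v) P ` S" using SC P
      by (intro image_eqI[of _ _ "c \<cdot>\<^sub>v a"]) (auto simp: mult_mat_vec subset_iff)
  qed
qed

lemma dim_inj:
  fixes P :: "real mat"
  assumes P: "P \<in> carrier_mat r k"
    and S: "subspace class_ring S (module_vec TYPE(real) k)"
    and inj: "\<And>x. x \<in> S \<Longrightarrow> P *\<^sub>v x = 0\<^sub>v r \<Longrightarrow> x = 0\<^sub>v k"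
  shows "subspace_dim r ((\<lambda>x. P *\<^sub>v x) ` S) = subspace_dim k S"
proof -
  have "0\<^sub>v k \<in> S" using S unfolding subspace_def submodule_def by (auto simp: module_vec_simps)
  then have "{x \<in> S. P *\<^sub>v x = 0\<^sub>v r} = {0\<^sub>v k}" using inj P by auto
  then show ?thesis using dim_split[OF P S] dim_zero by simp
qed

lemma dim_mono:
  assumes S: "subspace class_ring S (module_vec TYPE(real) k)"
    and T: "subspace class_ring T (module_vec TYPE(real) k)"
    and ST: "S \<subseteq> T"
  shows "subspace_dim k S \<le> subspace_dim k T"
proof -
  interpret V: vec_space "TYPE(real)" k .
  interpret TV: vectorspace class_ring "V.vs T" using V.subspace_is_vs[OF T] .
  have "subspace class_ring S (V.vs T)" using V.nested_subspaces[OF T S ST] .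
  from TV.subspace_dim[OF this] subspace_fin_dim[OF T] subspace_fin_dim[OF S]
  show ?thesis unfolding subspace_dim_def by simp
qed

lemma rank_img:
  fixes A :: "real mat"
  assumes A: "A \<in> carrier_mat nr nc"
  shows "vec_space.rank nr A = subspace_dim nr ((\<lambda>x. A *\<^sub>v x) ` carrier_vec nc)"
proof -
  interpret V: vec_space "TYPE(real)" nr .
  have "V.col_space A = (\<lambda>x. A *\<^sub>v x) ` carrier_vec nc"
    using V.col_space_eq[OF A] A by auto
  then show ?thesis unfolding V.rank_def subspace_dim_def V.col_space_def by simp
qed

lemma full_subspace: "subspace class_ring (carrier_vec k) (module_vec TYPE(real) k)"
  by (rule vsubspaceI) auto

lemma img_ker:
  fixes X :: "real mat"
  assumes X: "X \<in> carrier_mat r k"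
  shows "subspace_dim r ((\<lambda>x. X *\<^sub>v x) ` carrier_vec k) + subspace_dim k (mat_kernel X) = k"
proof -
  have "{x \<in> carrier_vec k. X *\<^sub>v x = 0\<^sub>v r} = mat_kernel X" using X by (auto simp: mat_kernel_def)
  then show ?thesis using dim_split[OF X full_subspace] dim_full by simp
qed

lemma quad_transpose:
  fixes X :: "real mat"
  assumes X: "X \<in> carrier_mat r k" and x: "x \<in> carrier_vec k"
  shows "x \<bullet> (transpose_mat X *\<^sub>v (X *\<^sub>v x)) = (X *\<^sub>v x) \<bullet> (X *\<^sub>v x)"
proof -
  have "x \<bullet> (transpose_mat X *\<^sub>v (X *\<^sub>v x)) = (\<Sum>j<k. x $ j * (\<Sum>i<r. X $$ (i, j) * (X *\<^sub>v x) $ i))"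
    using X x by (auto simp: scalar_prod_def mult_mat_vec_def lessThan_atLeast0 row_def col_def)
  also have "\<dots> = (\<Sum>i<r. (X *\<^sub>v x) $ i * (\<Sum>j<k. X $$ (i, j) * x $ j))"
    by (simp add: sum_distrib_left sum_distrib_right sum.swap[of _ "{..<k}"] mult.commute mult.left_commute)
  also have "\<dots> = (X *\<^sub>v x) \<bullet> (X *\<^sub>v x)"
    using X x by (auto simp: scalar_prod_def mult_mat_vec_def lessThan_atLeast0 row_def col_def)
  finally show ?thesis .
qed

lemma self_scalar_zero:
  fixes v :: "real vec"
  assumes "v \<in> carrier_vec r" "v \<bullet> v = 0"
  shows "v = 0\<^sub>v r"
proof -
  have "(\<Sum>i\<in>{0..<r}. v $ i * v $ i) = 0" using assms by (auto simp: scalar_prod_def)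
  then have "\<forall>i\<in>{0..<r}. v $ i * v $ i = 0" by (subst (asm) sum_nonneg_eq_0_iff) auto
  then show ?thesis using assms by (intro eq_vecI) auto
qed

lemma gram_kernel:
  fixes X :: "real mat"
  assumes X: "X \<in> carrier_mat r k"
  shows "mat_kernel (transpose_mat X * X) = mat_kernel X"
proof (rule equalityI; rule subsetI)
  fix x assume "x \<in> mat_kernel (transpose_mat X * X)"
  then have x: "x \<in> carrier_vec k" "(transpose_mat X * X) *\<^sub>v x = 0\<^sub>v k" using X by (auto simp: mat_kernel_def)
  then have "transpose_mat X *\<^sub>v (X *\<^sub>v x) = 0\<^sub>v k" using X by (simp add: assoc_mult_mat_vec)
  then have "(X *\<^sub>v x) \<bullet> (X *\<^sub>v x) = 0" using quad_transpose[OF X x(1)] x by simp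
  then have "X *\<^sub>v x = 0\<^sub>v r" using X x by (intro self_scalar_zero) auto
  then show "x \<in> mat_kernel X" using x X by (auto simp: mat_kernel_def)
next
  fix x assume "x \<in> mat_kernel X"
  then have x: "x \<in> carrier_vec k" "X *\<^sub>v x = 0\<^sub>v r" using X by (auto simp: mat_kernel_def)
  then have "(transpose_mat X * X) *\<^sub>v x = 0\<^sub>v k" using X by (simp add: assoc_mult_mat_vec mat_vec_zero)
  then show "x \<in> mat_kernel (transpose_mat X * X)" using x X by (auto simp: mat_kernel_def)
qed

lemma img_transpose_le:
  fixes X :: "real mat"
  assumes X: "X \<in> carrier_mat r k"
  shows "subspace_dim r ((\<lambda>x. X *\<^sub>v x) ` carrier_vec k)
    \<le> subspace_dim k ((\<lambda>x. transpose_mat X *\<^sub>v x) ` carrier_vec r)"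
proof -
  let ?G = "transpose_mat X * X"
  have G: "?G \<in> carrier_mat k k" using X by auto
  have XT: "transpose_mat X \<in> carrier_mat k r" using X by auto
  have sub: "(\<lambda>x. ?G *\<^sub>v x) ` carrier_vec k \<subseteq> (\<lambda>x. transpose_mat X *\<^sub>v x) ` carrier_vec r"
  proof
    fix y assume "y \<in> (\<lambda>x. ?G *\<^sub>v x) ` carrier_vec k"
    then obtain x where x: "x \<in> carrier_vec k" "y = ?G *\<^sub>v x" by auto
    then have "y = transpose_mat X *\<^sub>v (X *\<^sub>v x)" using X by (simp add: assoc_mult_mat_vec)
    then show "y \<in> (\<lambda>x. transpose_mat X *\<^sub>v x) ` carrier_vec r" using X x by auto
  qed
  have "subspace_dim k ((\<lambda>x. ?G *\<^sub>v x) ` carrier_vec k) \<le> subspace_dim k ((\<lambda>x. transpose_mat X *\<^sub>v x) ` carrier_vec r)"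
    by (rule dim_mono[OF image_subspace[OF G full_subspace] image_subspace[OF XT full_subspace] sub])
  moreover have "subspace_dim k ((\<lambda>x. ?G *\<^sub>v x) ` carrier_vec k) + subspace_dim k (mat_kernel X) = k"
    using img_ker[OF G] gram_kernel[OF X] by simp
  moreover note img_ker[OF X]
  ultimately show ?thesis by linarith
qed

lemma img_transpose_eq:
  fixes X :: "real mat"
  assumes X: "X \<in> carrier_mat r k"
  shows "subspace_dim r ((\<lambda>x. X *\<^sub>v x) ` carrier_vec k)
    = subspace_dim k ((\<lambda>x. transpose_mat X *\<^sub>v x) ` carrier_vec r)"
  using img_transpose_le[OF X] img_transpose_le[of "transpose_mat X" k r] X by auto


lemma smult_mat_vec:
  fixes X :: "real mat"
  assumes "X \<in> carrier_mat r k" "y \<in> carrier_vec k"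
  shows "(c \<cdot>\<^sub>m X) *\<^sub>v y = c \<cdot>\<^sub>v (X *\<^sub>v y)"
  using assms by (intro eq_vecI) (auto simp: mult_mat_vec_def scalar_prod_def sum_distrib_left mult.assoc)

lemma refl_apply:
  fixes A :: "real mat"
  assumes A: "A \<in> carrier_mat m s" and y: "y \<in> carrier_vec m"
  shows "(2 \<cdot>\<^sub>m (A * transpose_mat A) - 1\<^sub>m m) *\<^sub>v y = 2 \<cdot>\<^sub>v (A *\<^sub>v (transpose_mat A *\<^sub>v y)) - y"
proof -
  have AA: "A * transpose_mat A \<in> carrier_mat m m" using A by auto
  have "(2 \<cdot>\<^sub>m (A * transpose_mat A) - 1\<^sub>m m) *\<^sub>v y = (2 \<cdot>\<^sub>m (A * transpose_mat A)) *\<^sub>v y - 1\<^sub>m m *\<^sub>v y"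
    using AA y by (intro minus_mult_distrib_mat_vec) auto
  also have "\<dots> = 2 \<cdot>\<^sub>v (A *\<^sub>v (transpose_mat A *\<^sub>v y)) - y"
    using smult_mat_vec[OF AA y] A y by simp
  finally show ?thesis .
qed

lemma orth_cancel:
  fixes A :: "real mat"
  assumes A: "A \<in> carrier_mat m s" and AA: "transpose_mat A * A = 1\<^sub>m s" and a: "a \<in> carrier_vec s"
  shows "transpose_mat A *\<^sub>v (A *\<^sub>v a) = a"
proof -
  have "transpose_mat A *\<^sub>v (A *\<^sub>v a) = (transpose_mat A * A) *\<^sub>v a" using A a by simp
  then show ?thesis using AA a by simp
qed


lemma main_abstract:
  fixes A B :: "real mat"
  assumes A: "A \<in> carrier_mat m s" and B: "B \<in> carrier_mat m n"
    and AA: "transpose_mat A * A = 1\<^sub>m s" and BB: "transpose_mat B * B = 1\<^sub>m n"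
  defines "U \<equiv> (2 \<cdot>\<^sub>m (A * transpose_mat A) - 1\<^sub>m m) * (2 \<cdot>\<^sub>m (B * transpose_mat B) - 1\<^sub>m m)"
    and "Ch \<equiv> transpose_mat B * A"
  defines "W1 \<equiv> image_of_set A (mat_kernel Ch)"
    and "W2 \<equiv> image_of_set B (mat_kernel (transpose_mat Ch))"
  shows "eigenspace_mat U (-1) = {x + y | x y. x \<in> W1 \<and> y \<in> W2}
         \<and> W1 \<inter> W2 = {0\<^sub>v m}
         \<and> subspace_dim m (eigenspace_mat U (-1)) = subspace_dim s (mat_kernel Ch) + subspace_dim n (mat_kernel (transpose_mat Ch))"
proof -
  let ?At = "transpose_mat A" and ?Bt = "transpose_mat B"
  have At: "?At \<in> carrier_mat s m" and Bt: "?Bt \<in> carrier_mat n m" using A B by auto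
  have Ch: "Ch \<in> carrier_mat n s" using A B unfolding Ch_def by auto
  have ChT: "transpose_mat Ch = ?At * B" unfolding Ch_def using A Bt by (simp add: transpose_mult[OF Bt A])
  have ChTc: "transpose_mat Ch \<in> carrier_mat s n" using Ch by auto
  have R1: "(2 \<cdot>\<^sub>m (A * ?At) - 1\<^sub>m m) \<in> carrier_mat m m" using A by auto
  have R2: "(2 \<cdot>\<^sub>m (B * ?Bt) - 1\<^sub>m m) \<in> carrier_mat m m" using B by auto
  have U: "U \<in> carrier_mat m m" unfolding U_def using R1 R2 by auto
  have Ux: "U *\<^sub>v x = 2 \<cdot>\<^sub>v (A *\<^sub>v (?At *\<^sub>v (2 \<cdot>\<^sub>v (B *\<^sub>v (?Bt *\<^sub>v x)) - x))) - (2 \<cdot>\<^sub>v (B *\<^sub>v (?Bt *\<^sub>v x)) - x)"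
    if x: "x \<in> carrier_vec m" for x
  proof -
    have "U *\<^sub>v x = (2 \<cdot>\<^sub>m (A * ?At) - 1\<^sub>m m) *\<^sub>v ((2 \<cdot>\<^sub>m (B * ?Bt) - 1\<^sub>m m) *\<^sub>v x)"
      unfolding U_def using R1 R2 x by simp
    also have "\<dots> = (2 \<cdot>\<^sub>m (A * ?At) - 1\<^sub>m m) *\<^sub>v (2 \<cdot>\<^sub>v (B *\<^sub>v (?Bt *\<^sub>v x)) - x)"
      using refl_apply[OF B x] by simp
    also have "\<dots> = 2 \<cdot>\<^sub>v (A *\<^sub>v (?At *\<^sub>v (2 \<cdot>\<^sub>v (B *\<^sub>v (?Bt *\<^sub>v x)) - x))) - (2 \<cdot>\<^sub>v (B *\<^sub>v (?Bt *\<^sub>v x)) - x)"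
      using B x by (intro refl_apply[OF A]) auto
    finally show ?thesis .
  qed
  \<comment> \<open>characterisation of the eigenspace\<close>
  define D where "D = {A *\<^sub>v a + B *\<^sub>v b | a b. a \<in> mat_kernel Ch \<and> b \<in> mat_kernel (transpose_mat Ch)}"
  have kerCh: "a \<in> carrier_vec s \<and> ?Bt *\<^sub>v (A *\<^sub>v a) = 0\<^sub>v n" if "a \<in> mat_kernel Ch" for a
    using that Ch A Bt unfolding Ch_def by (auto simp: mat_kernel_def)
  have kerChT: "b \<in> carrier_vec n \<and> ?At *\<^sub>v (B *\<^sub>v b) = 0\<^sub>v s" if "b \<in> mat_kernel (transpose_mat Ch)" for b
    using that ChTc At B unfolding ChT by (auto simp: mat_kernel_def)
  have proj: "?At *\<^sub>v (A *\<^sub>v a + B *\<^sub>v b) = a" "?Bt *\<^sub>v (A *\<^sub>v a + B *\<^sub>v b) = b"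
    if "a \<in> mat_kernel Ch" "b \<in> mat_kernel (transpose_mat Ch)" for a b
  proof -
    note a = kerCh[OF that(1)] and b = kerChT[OF that(2)]
    have "?At *\<^sub>v (A *\<^sub>v a + B *\<^sub>v b) = ?At *\<^sub>v (A *\<^sub>v a) + ?At *\<^sub>v (B *\<^sub>v b)"
      using At A B a b by (intro mult_add_distrib_mat_vec) auto
    then show "?At *\<^sub>v (A *\<^sub>v a + B *\<^sub>v b) = a" using orth_cancel[OF A AA] a b by simp
    have "?Bt *\<^sub>v (A *\<^sub>v a + B *\<^sub>v b) = ?Bt *\<^sub>v (A *\<^sub>v a) + ?Bt *\<^sub>v (B *\<^sub>v b)"
      using Bt A B a b by (intro mult_add_distrib_mat_vec) auto
    then show "?Bt *\<^sub>v (A *\<^sub>v a + B *\<^sub>v b) = b" using orth_cancel[OF B BB] a b by simp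
  qed
  have ED: "eigenspace_mat U (-1) = D"
  proof (rule equalityI; rule subsetI)
    fix x assume "x \<in> eigenspace_mat U (-1)"
    then have x: "x \<in> carrier_vec m" and ev: "U *\<^sub>v x = (-1) \<cdot>\<^sub>v x"
      using U unfolding eigenspace_mat_def by auto
    define a where "a = ?At *\<^sub>v x"
    define b where "b = ?Bt *\<^sub>v x"
    define y where "y = A *\<^sub>v a"
    define z where "z = B *\<^sub>v b"
    have a: "a \<in> carrier_vec s" and b: "b \<in> carrier_vec n" and y: "y \<in> carrier_vec m" and z: "z \<in> carrier_vec m"
      using x A B unfolding a_def b_def y_def z_def by auto
    have Atz: "?At *\<^sub>v z \<in> carrier_vec s" using z A by auto
    have lin: "?At *\<^sub>v (2 \<cdot>\<^sub>v z - x) = 2 \<cdot>\<^sub>v (?At *\<^sub>v z) - a"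
      unfolding a_def using At z x by (simp add: mult_minus_distrib_mat_vec mult_mat_vec)
    have star: "2 \<cdot>\<^sub>v (A *\<^sub>v (2 \<cdot>\<^sub>v (?At *\<^sub>v z) - a)) - (2 \<cdot>\<^sub>v z - x) = (-1) \<cdot>\<^sub>v x"
      using ev Ux[OF x] lin unfolding z_def b_def by simp
    have star2: "A *\<^sub>v (2 \<cdot>\<^sub>v (?At *\<^sub>v z) - a) = z - x"
    proof (rule eq_vecI)
      fix i assume i: "i < dim_vec (z - x)"
      have "(2 \<cdot>\<^sub>v (A *\<^sub>v (2 \<cdot>\<^sub>v (?At *\<^sub>v z) - a)) - (2 \<cdot>\<^sub>v z - x)) $ i = ((-1) \<cdot>\<^sub>v x) $ i"
        using star by simp
      then show "(A *\<^sub>v (2 \<cdot>\<^sub>v (?At *\<^sub>v z) - a)) $ i = (z - x) $ i"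
        using i x z A by simp
    qed (use x z A in simp)
    have w: "2 \<cdot>\<^sub>v (?At *\<^sub>v z) - a \<in> carrier_vec s" using Atz a by auto
    have "?At *\<^sub>v (A *\<^sub>v (2 \<cdot>\<^sub>v (?At *\<^sub>v z) - a)) = ?At *\<^sub>v (z - x)" using star2 by simp
    then have "2 \<cdot>\<^sub>v (?At *\<^sub>v z) - a = ?At *\<^sub>v z - a"
      using orth_cancel[OF A AA w] At z x unfolding a_def by (simp add: mult_minus_distrib_mat_vec)
    then have Atz0: "?At *\<^sub>v z = 0\<^sub>v s"
    proof -
      assume h: "2 \<cdot>\<^sub>v (?At *\<^sub>v z) - a = ?At *\<^sub>v z - a"
      show ?thesis
      proof (rule eq_vecI)
        fix i assume i: "i < dim_vec (0\<^sub>v s)"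
        have "(2 \<cdot>\<^sub>v (?At *\<^sub>v z) - a) $ i = (?At *\<^sub>v z - a) $ i" using h by simp
        then show "(?At *\<^sub>v z) $ i = 0\<^sub>v s $ i" using i a A by simp
      qed (use Atz A in simp)
    qed
    have "A *\<^sub>v (2 \<cdot>\<^sub>v (?At *\<^sub>v z) - a) = (-1) \<cdot>\<^sub>v y"
      unfolding Atz0 y_def using A a by (simp add: mult_minus_distrib_mat_vec mult_mat_vec mat_vec_zero[OF A], intro eq_vecI, auto)
    then have xyz: "x = y + z"
    proof -
      assume h: "A *\<^sub>v (2 \<cdot>\<^sub>v (?At *\<^sub>v z) - a) = (-1) \<cdot>\<^sub>v y"
      show ?thesis
      proof (rule eq_vecI)
        fix i assume i: "i < dim_vec (y + z)"
        have "(A *\<^sub>v (2 \<cdot>\<^sub>v (?At *\<^sub>v z) - a)) $ i = (z - x) $ i" using star2 by simp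
        then show "x $ i = (y + z) $ i" using h i x y z by simp
      qed (use x y z in simp)
    qed
    have bk: "b \<in> mat_kernel (transpose_mat Ch)"
      using Atz0 b ChTc A B unfolding ChT z_def by (auto simp: mat_kernel_def)
    have "?Bt *\<^sub>v y = ?Bt *\<^sub>v x - ?Bt *\<^sub>v z"
    proof -
      have "y = x - z" using xyz x y z by auto
      then show ?thesis using Bt x z by (simp add: mult_minus_distrib_mat_vec)
    qed
    also have "\<dots> = 0\<^sub>v n" unfolding z_def b_def using orth_cancel[OF B BB] Bt x by simp
    finally have "Ch *\<^sub>v a = 0\<^sub>v n" unfolding Ch_def y_def using Bt A a by simp
    then have ak: "a \<in> mat_kernel Ch" using a Ch by (auto simp: mat_kernel_def)
    show "x \<in> D" unfolding D_def using xyz ak bk unfolding y_def z_def by blast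
  next
    fix x assume "x \<in> D"
    then obtain a b where ab: "a \<in> mat_kernel Ch" "b \<in> mat_kernel (transpose_mat Ch)" and xd: "x = A *\<^sub>v a + B *\<^sub>v b"
      unfolding D_def by blast
    note a = kerCh[OF ab(1)] and b = kerChT[OF ab(2)]
    have x: "x \<in> carrier_vec m" using xd A B a b by auto
    have ya: "A *\<^sub>v a \<in> carrier_vec m" and zb: "B *\<^sub>v b \<in> carrier_vec m" using A B a b by auto
    have "?At *\<^sub>v (2 \<cdot>\<^sub>v (B *\<^sub>v (?Bt *\<^sub>v x)) - x) = ?At *\<^sub>v (2 \<cdot>\<^sub>v (B *\<^sub>v b)) - ?At *\<^sub>v x"
      using proj[OF ab] xd At zb x by (simp add: mult_minus_distrib_mat_vec)
    also have "\<dots> = (-1) \<cdot>\<^sub>v a"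
      using proj[OF ab] xd At zb b a by (simp add: mult_mat_vec, intro eq_vecI, auto)
    finally have h: "?At *\<^sub>v (2 \<cdot>\<^sub>v (B *\<^sub>v (?Bt *\<^sub>v x)) - x) = (-1) \<cdot>\<^sub>v a" .
    have "U *\<^sub>v x = 2 \<cdot>\<^sub>v (A *\<^sub>v ((-1) \<cdot>\<^sub>v a)) - (2 \<cdot>\<^sub>v (B *\<^sub>v b) - x)"
      using Ux[OF x] h proj[OF ab] xd by simp
    also have "\<dots> = (-1) \<cdot>\<^sub>v x"
      using A B a ya zb xd by (intro eq_vecI) (auto simp: mult_mat_vec)
    finally show "x \<in> eigenspace_mat U (-1)" using x U unfolding eigenspace_mat_def by auto
  qed
  have zk: "0\<^sub>v s \<in> mat_kernel Ch" using Ch by (auto simp: mat_kernel_def mat_vec_zero[OF Ch])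
  have zkT: "0\<^sub>v n \<in> mat_kernel (transpose_mat Ch)" using ChTc by (auto simp: mat_kernel_def mat_vec_zero[OF ChTc])
  have part1: "eigenspace_mat U (-1) = {x + y | x y. x \<in> W1 \<and> y \<in> W2}"
    unfolding ED D_def W1_def W2_def image_of_set_def by blast
  have part2: "W1 \<inter> W2 = {0\<^sub>v m}"
  proof (rule equalityI; rule subsetI)
    fix x assume "x \<in> W1 \<inter> W2"
    then obtain a b where ab: "a \<in> mat_kernel Ch" "b \<in> mat_kernel (transpose_mat Ch)"
      and xa: "x = A *\<^sub>v a" and xb: "x = B *\<^sub>v b"
      unfolding W1_def W2_def image_of_set_def by blast
    note a = kerCh[OF ab(1)] and b = kerChT[OF ab(2)]
    have "b = ?Bt *\<^sub>v x" using xb orth_cancel[OF B BB] b by simp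
    also have "\<dots> = 0\<^sub>v n" using xa a by simp
    finally show "x \<in> {0\<^sub>v m}" using xb B by (simp add: mat_vec_zero[OF B])
  next
    fix x :: "real vec" assume "x \<in> {0\<^sub>v m}"
    then have "x = A *\<^sub>v 0\<^sub>v s" "x = B *\<^sub>v 0\<^sub>v n" using mat_vec_zero[OF A] mat_vec_zero[OF B] by auto
    then show "x \<in> W1 \<inter> W2" unfolding W1_def W2_def image_of_set_def using zk zkT by blast
  qed
  have Esub: "subspace class_ring (eigenspace_mat U (-1)) (module_vec TYPE(real) m)"
  proof (rule vsubspaceI)
    show "eigenspace_mat U (-1) \<subseteq> carrier_vec m" using U unfolding eigenspace_mat_def by auto
    show "0\<^sub>v m \<in> eigenspace_mat U (-1)" using U unfolding eigenspace_mat_def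
      by (auto simp: mat_vec_zero[OF U])
    fix x y assume "x \<in> eigenspace_mat U (-1)" "y \<in> eigenspace_mat U (-1)"
    then have xy: "x \<in> carrier_vec m" "y \<in> carrier_vec m" "U *\<^sub>v x = (-1) \<cdot>\<^sub>v x" "U *\<^sub>v y = (-1) \<cdot>\<^sub>v y"
      using U unfolding eigenspace_mat_def by auto
    have "U *\<^sub>v (x + y) = U *\<^sub>v x + U *\<^sub>v y" using U xy by (intro mult_add_distrib_mat_vec) auto
    also have "\<dots> = (-1) \<cdot>\<^sub>v (x + y)" using xy by (intro eq_vecI) auto
    finally show "x + y \<in> eigenspace_mat U (-1)" using xy U unfolding eigenspace_mat_def by auto
  next
    fix c x assume "x \<in> eigenspace_mat U (-1)"
    then have xy: "x \<in> carrier_vec m" "U *\<^sub>v x = (-1) \<cdot>\<^sub>v x"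
      using U unfolding eigenspace_mat_def by auto
    have "U *\<^sub>v (c \<cdot>\<^sub>v x) = c \<cdot>\<^sub>v (U *\<^sub>v x)" using U xy by (intro mult_mat_vec) auto
    also have "\<dots> = (-1) \<cdot>\<^sub>v (c \<cdot>\<^sub>v x)" using xy by (intro eq_vecI) auto
    finally show "c \<cdot>\<^sub>v x \<in> eigenspace_mat U (-1)" using xy U unfolding eigenspace_mat_def by auto
  qed
  have img: "(\<lambda>x. ?At *\<^sub>v x) ` eigenspace_mat U (-1) = mat_kernel Ch"
  proof (rule equalityI; rule subsetI)
    fix y assume "y \<in> (\<lambda>x. ?At *\<^sub>v x) ` eigenspace_mat U (-1)"
    then obtain a b where ab: "a \<in> mat_kernel Ch" "b \<in> mat_kernel (transpose_mat Ch)"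
      and y: "y = ?At *\<^sub>v (A *\<^sub>v a + B *\<^sub>v b)" unfolding ED D_def by blast
    show "y \<in> mat_kernel Ch" using proj[OF ab] y ab by simp
  next
    fix a assume a: "a \<in> mat_kernel Ch"
    have "A *\<^sub>v a + B *\<^sub>v 0\<^sub>v n \<in> eigenspace_mat U (-1)" unfolding ED D_def using a zkT by blast
    moreover have "?At *\<^sub>v (A *\<^sub>v a + B *\<^sub>v 0\<^sub>v n) = a" using proj(1)[OF a zkT] .
    ultimately show "a \<in> (\<lambda>x. ?At *\<^sub>v x) ` eigenspace_mat U (-1)" by (metis image_eqI)
  qed
  have kerp: "{x \<in> eigenspace_mat U (-1). ?At *\<^sub>v x = 0\<^sub>v s} = (\<lambda>b. B *\<^sub>v b) ` mat_kernel (transpose_mat Ch)"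
  proof (rule equalityI; rule subsetI)
    fix x assume "x \<in> {x \<in> eigenspace_mat U (-1). ?At *\<^sub>v x = 0\<^sub>v s}"
    then obtain a b where ab: "a \<in> mat_kernel Ch" "b \<in> mat_kernel (transpose_mat Ch)"
      and x: "x = A *\<^sub>v a + B *\<^sub>v b" and x0: "?At *\<^sub>v x = 0\<^sub>v s" unfolding ED D_def by blast
    have "a = 0\<^sub>v s" using proj[OF ab] x x0 by simp
    then have "x = B *\<^sub>v b" using x mat_vec_zero[OF A] kerChT[OF ab(2)] B by simp
    then show "x \<in> (\<lambda>b. B *\<^sub>v b) ` mat_kernel (transpose_mat Ch)" using ab by blast
  next
    fix x assume "x \<in> (\<lambda>b. B *\<^sub>v b) ` mat_kernel (transpose_mat Ch)"
    then obtain b where b: "b \<in> mat_kernel (transpose_mat Ch)" and x: "x = B *\<^sub>v b" by blast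
    have x': "x = A *\<^sub>v 0\<^sub>v s + B *\<^sub>v b" using x mat_vec_zero[OF A] kerChT[OF b] B by simp
    have "x \<in> eigenspace_mat U (-1)" unfolding ED D_def using zk b x' by blast
    moreover have "?At *\<^sub>v x = 0\<^sub>v s" using proj[OF zk b] x' by simp
    ultimately show "x \<in> {x \<in> eigenspace_mat U (-1). ?At *\<^sub>v x = 0\<^sub>v s}" by blast
  qed
  have dW2: "subspace_dim m ((\<lambda>b. B *\<^sub>v b) ` mat_kernel (transpose_mat Ch)) = subspace_dim n (mat_kernel (transpose_mat Ch))"
  proof (rule dim_inj[OF B kernel_subspace[OF ChTc]])
    fix b assume b: "b \<in> mat_kernel (transpose_mat Ch)" "B *\<^sub>v b = 0\<^sub>v m"
    have "b = ?Bt *\<^sub>v (B *\<^sub>v b)" using orth_cancel[OF B BB] kerChT[OF b(1)] by simp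
    then show "b = 0\<^sub>v n" using b(2) mat_vec_zero[OF Bt] by simp
  qed
  have part3: "subspace_dim m (eigenspace_mat U (-1)) = subspace_dim s (mat_kernel Ch) + subspace_dim n (mat_kernel (transpose_mat Ch))"
    using dim_split[OF At Esub] img kerp dW2 by simp
  show ?thesis using part1 part2 part3 by blast
qed


definition cnorm :: "real mat \<Rightarrow> nat \<Rightarrow> real" where
  "cnorm X j = sqrt (\<Sum>k < dim_row X. (X $$ (k,j))\<^sup>2)"

lemma normalize_cols_carrier: "X \<in> carrier_mat r k \<Longrightarrow> normalize_cols X \<in> carrier_mat r k"
  unfolding normalize_cols_def by auto

lemma normalize_cols_index: "i < dim_row X \<Longrightarrow> j < dim_col X \<Longrightarrow>
  normalize_cols X $$ (i,j) = X $$ (i,j) / cnorm X j"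
  unfolding normalize_cols_def cnorm_def by auto

lemma normalize_orth:
  fixes X :: "real mat"
  assumes X: "X \<in> carrier_mat r k"
    and orth: "\<And>j j'. j < k \<Longrightarrow> j' < k \<Longrightarrow> j \<noteq> j' \<Longrightarrow> (\<Sum>i<r. X $$ (i,j) * X $$ (i,j')) = 0"
    and nz: "\<And>j. j < k \<Longrightarrow> cnorm X j \<noteq> 0"
  shows "transpose_mat (normalize_cols X) * normalize_cols X = 1\<^sub>m k"
proof (rule eq_matI)
  let ?Y = "normalize_cols X"
  have Y: "?Y \<in> carrier_mat r k" using normalize_cols_carrier[OF X] .
  show "dim_row (transpose_mat ?Y * ?Y) = dim_row (1\<^sub>m k)" using Y by simp
  show "dim_col (transpose_mat ?Y * ?Y) = dim_col (1\<^sub>m k)" using Y by simp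
  fix j j' assume jj: "j < dim_row (1\<^sub>m k)" "j' < dim_col (1\<^sub>m k)"
  then have j: "j < k" "j' < k" by auto
  have "(transpose_mat ?Y * ?Y) $$ (j,j') = (\<Sum>i<r. ?Y $$ (i,j) * ?Y $$ (i,j'))"
    using Y j by (simp add: scalar_prod_def lessThan_atLeast0 col_def row_def)
  also have "\<dots> = (\<Sum>i<r. X $$ (i,j) * X $$ (i,j')) / (cnorm X j * cnorm X j')"
    using X j by (simp add: normalize_cols_index sum_divide_distrib)
  also have "\<dots> = 1\<^sub>m k $$ (j,j')"
  proof (cases "j = j'")
    case True
    have "(\<Sum>i<r. X $$ (i,j) * X $$ (i,j)) = (cnorm X j)\<^sup>2"
      unfolding cnorm_def using X by (simp add: power2_eq_square[symmetric] sum_nonneg)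
    then show ?thesis using True nz[OF j(1)] j by (simp add: power2_eq_square)
  next
    case False
    then show ?thesis using orth[OF j False] j by simp
  qed
  finally show "(transpose_mat ?Y * ?Y) $$ (j,j') = 1\<^sub>m k $$ (j,j')" .
qed

lemma cnorm_nz:
  fixes X :: "real mat"
  assumes X: "X \<in> carrier_mat r k" and i: "i < r" and x: "X $$ (i,j) \<noteq> 0"
  shows "cnorm X j \<noteq> 0"
proof -
  have "0 < (X $$ (i,j))\<^sup>2" using x by simp
  also have "\<dots> \<le> (\<Sum>k<r. (X $$ (k,j))\<^sup>2)"
    using i by (intro member_le_sum) auto
  finally show ?thesis unfolding cnorm_def using X by simp
qed

lemma scaled_kernel_dim:
  fixes C Ch :: "real mat"
  assumes C: "C \<in> carrier_mat r k" and Ch: "Ch \<in> carrier_mat r k"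
    and ent: "\<And>i j. i < r \<Longrightarrow> j < k \<Longrightarrow> Ch $$ (i,j) = d1 i * C $$ (i,j) * d2 j"
    and d1: "\<And>i. i < r \<Longrightarrow> d1 i \<noteq> 0" and d2: "\<And>j. j < k \<Longrightarrow> d2 j \<noteq> 0"
  shows "subspace_dim k (mat_kernel Ch) = subspace_dim k (mat_kernel C)"
proof -
  define D where "D = mat k k (\<lambda>(i,j). if i = j then d2 i else 0)"
  have D: "D \<in> carrier_mat k k" unfolding D_def by auto
  have Dx: "(D *\<^sub>v x) $ j = d2 j * x $ j" if "x \<in> carrier_vec k" "j < k" for x j
  proof -
    have "(D *\<^sub>v x) $ j = (\<Sum>i\<in>{0..<k}. (if j = i then d2 j else 0) * x $ i)"
      using that unfolding D_def by (simp add: mult_mat_vec_def scalar_prod_def row_def)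
    also have "\<dots> = (\<Sum>i\<in>{0..<k}. if i = j then d2 j * x $ j else 0)"
      by (intro sum.cong) auto
    also have "\<dots> = d2 j * x $ j" using that(2) by simp
    finally show ?thesis .
  qed
  have Dxc: "D *\<^sub>v x \<in> carrier_vec k" for x unfolding D_def carrier_vec_def by simp
  have Chx: "(Ch *\<^sub>v x) $ i = d1 i * (C *\<^sub>v (D *\<^sub>v x)) $ i" if "x \<in> carrier_vec k" "i < r" for x i
  proof -
    have "(Ch *\<^sub>v x) $ i = (\<Sum>j\<in>{0..<k}. Ch $$ (i,j) * x $ j)"
      using that Ch by (simp add: mult_mat_vec_def scalar_prod_def row_def)
    also have "\<dots> = (\<Sum>j\<in>{0..<k}. d1 i * (C $$ (i,j) * (D *\<^sub>v x) $ j))"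
      using that by (intro sum.cong) (auto simp: ent Dx)
    also have "\<dots> = d1 i * (C *\<^sub>v (D *\<^sub>v x)) $ i"
      using that C D by (simp add: mult_mat_vec_def scalar_prod_def row_def sum_distrib_left)
    finally show ?thesis .
  qed
  have kerD: "x \<in> mat_kernel Ch \<longleftrightarrow> x \<in> carrier_vec k \<and> D *\<^sub>v x \<in> mat_kernel C" for x
  proof
    assume x: "x \<in> mat_kernel Ch"
    then have xc: "x \<in> carrier_vec k" and z: "Ch *\<^sub>v x = 0\<^sub>v r" using Ch by (auto simp: mat_kernel_def)
    have "C *\<^sub>v (D *\<^sub>v x) = 0\<^sub>v r"
    proof (rule eq_vecI)
      fix i assume "i < dim_vec (0\<^sub>v r)" then have i: "i < r" by simp
      have "d1 i * (C *\<^sub>v (D *\<^sub>v x)) $ i = 0" using Chx[OF xc i] z i by simp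
      then show "(C *\<^sub>v (D *\<^sub>v x)) $ i = 0\<^sub>v r $ i" using d1[OF i] i by simp
    qed (use C in simp)
    then show "x \<in> carrier_vec k \<and> D *\<^sub>v x \<in> mat_kernel C" using xc C D by (auto simp: mat_kernel_def)
  next
    assume x: "x \<in> carrier_vec k \<and> D *\<^sub>v x \<in> mat_kernel C"
    then have "C *\<^sub>v (D *\<^sub>v x) = 0\<^sub>v r" using C D by (auto simp: mat_kernel_def)
    then have "Ch *\<^sub>v x = 0\<^sub>v r" using Ch x Chx by (intro eq_vecI) auto
    then show "x \<in> mat_kernel Ch" using x Ch by (auto simp: mat_kernel_def)
  qed
  have "(\<lambda>x. D *\<^sub>v x) ` mat_kernel Ch = mat_kernel C"
  proof (rule equalityI; rule subsetI)
    fix y assume "y \<in> (\<lambda>x. D *\<^sub>v x) ` mat_kernel Ch" then show "y \<in> mat_kernel C" using kerD by auto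
  next
    fix y assume y: "y \<in> mat_kernel C"
    then have yc: "y \<in> carrier_vec k" using C by (auto simp: mat_kernel_def)
    define x where "x = vec k (\<lambda>j. y $ j / d2 j)"
    have xc: "x \<in> carrier_vec k" unfolding x_def by auto
    have "D *\<^sub>v x = y" using yc Dx[OF xc] d2 D by (intro eq_vecI) (auto simp: x_def)
    then show "y \<in> (\<lambda>x. D *\<^sub>v x) ` mat_kernel Ch" using kerD xc y by (metis image_eqI)
  qed
  moreover have "subspace_dim k ((\<lambda>x. D *\<^sub>v x) ` mat_kernel Ch) = subspace_dim k (mat_kernel Ch)"
  proof (rule dim_inj[OF D kernel_subspace[OF Ch]])
    fix x assume x: "x \<in> mat_kernel Ch" "D *\<^sub>v x = 0\<^sub>v k"
    then have xc: "x \<in> carrier_vec k" using Ch by (auto simp: mat_kernel_def)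
    show "x = 0\<^sub>v k"
    proof (rule eq_vecI)
      fix j assume "j < dim_vec (0\<^sub>v k)"
      then have j: "j < k" by simp
      have "(D *\<^sub>v x) $ j = 0" using x(2) j by simp
      then show "x $ j = 0\<^sub>v k $ j" using Dx[OF xc j] d2[OF j] j by simp
    qed (use xc in simp)
  qed
  ultimately show ?thesis by simp
qed



lemma orbit_back:
  assumes fin: "finite Ar" and cl: "\<And>x. x \<in> Ar \<Longrightarrow> f x \<in> Ar" and inj: "inj_on f Ar" and a: "a \<in> Ar"
  shows "\<exists>t. (f ^^ t) ((f ^^ k) a) = a"
proof -
  have inAr: "(f ^^ j) x \<in> Ar" if "x \<in> Ar" for j x using that by (induction j) (auto intro: cl)
  have injp: "x = y" if "x \<in> Ar" "y \<in> Ar" "(f ^^ j) x = (f ^^ j) y" for j x y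
    using that
  proof (induction j arbitrary: x y)
    case 0 then show ?case by simp
  next
    case (Suc j)
    have "f ((f ^^ j) x) = f ((f ^^ j) y)" using Suc.prems by simp
    then have "(f ^^ j) x = (f ^^ j) y" using inj inAr Suc.prems by (meson inj_onD)
    then show ?case using Suc by blast
  qed
  have "\<not> inj_on (\<lambda>j. (f ^^ j) a) {0..card Ar}"
  proof
    assume "inj_on (\<lambda>j. (f ^^ j) a) {0..card Ar}"
    moreover have "(\<lambda>j. (f ^^ j) a) ` {0..card Ar} \<subseteq> Ar" using inAr a by auto
    ultimately have "card {0..card Ar} \<le> card Ar" using card_inj_on_le fin by blast
    then show False by simp
  qed
  then obtain i j where ij: "i \<noteq> j" "(f ^^ i) a = (f ^^ j) a"
    unfolding inj_on_def by blast
  obtain i' j' where ij': "i' < j'" "(f ^^ i') a = (f ^^ j') a"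
    using ij by (cases "i < j") (auto, metis linorder_neqE_nat)
  define p where "p = j' - i'"
  have p: "p > 0" using ij' unfolding p_def by simp
  have "(f ^^ i') ((f ^^ p) a) = (f ^^ (i' + p)) a" by (simp add: funpow_add)
  also have "i' + p = j'" using ij' unfolding p_def by simp
  finally have "(f ^^ i') ((f ^^ p) a) = (f ^^ i') a" using ij' by simp
  then have pa: "(f ^^ p) a = a" using injp inAr a by blast
  have pk: "(f ^^ (p * q)) a = a" for q
  proof (induction q)
    case 0 then show ?case by simp
  next
    case (Suc q)
    have "(f ^^ (p * Suc q)) a = (f ^^ p) ((f ^^ (p * q)) a)"
      by (simp add: funpow_add)
    then show ?case using pa Suc by simp
  qed
  have kk: "k \<le> p * k" using p by simp
  have "(f ^^ (p * k - k)) ((f ^^ k) a) = (f ^^ (p * k - k + k)) a"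
    by (simp only: funpow_add o_def)
  also have "p * k - k + k = p * k" using kk by simp
  finally have "(f ^^ (p * k - k)) ((f ^^ k) a) = (f ^^ (p * k)) a" .
  then show ?thesis using pk by metis
qed


lemma arcs_set: assumes "simple_graph n E" shows "set (arcs n E) = {(u,v). E u v}"
  using assms unfolding arcs_def simple_graph_def by auto

lemma fp_closed:
  assumes sg: "simple_graph n E" and rs: "rotation_system n E rho" and a: "a \<in> set (arcs n E)"
  shows "face_perm rho a \<in> set (arcs n E)"
proof -
  obtain u v where uv: "a = (u,v)" "E u v" using a arcs_set[OF sg] by auto
  then have v: "v < n" "E v u" using sg unfolding simple_graph_def by auto
  then have "bij_betw (rho v) (nbrs E v) (nbrs E v)" using rs unfolding rotation_system_def by auto
  moreover have "u \<in> nbrs E v" using v unfolding nbrs_def by auto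
  ultimately have "rho v u \<in> nbrs E v" using bij_betwE by blast
  then show ?thesis using uv arcs_set[OF sg] unfolding face_perm_def nbrs_def by auto
qed

lemma fp_inj:
  assumes sg: "simple_graph n E" and rs: "rotation_system n E rho"
  shows "inj_on (face_perm rho) (set (arcs n E))"
proof (rule inj_onI)
  fix a b assume a: "a \<in> set (arcs n E)" and b: "b \<in> set (arcs n E)" and eq: "face_perm rho a = face_perm rho b"
  obtain u v where uv: "a = (u,v)" "E u v" using a arcs_set[OF sg] by auto
  obtain u' v' where uv': "b = (u',v')" "E u' v'" using b arcs_set[OF sg] by auto
  have vv: "v = v'" and r: "rho v u = rho v u'" using eq uv uv' unfolding face_perm_def by auto
  have v: "v < n" "E v u" "E v u'" using sg uv uv' vv unfolding simple_graph_def by auto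
  then have "inj_on (rho v) (nbrs E v)" using rs unfolding rotation_system_def bij_betw_def by auto
  then have "u = u'" using r v unfolding nbrs_def by (auto dest: inj_onD)
  then show "a = b" using uv uv' vv by simp
qed

lemma face_of_eq:
  assumes sg: "simple_graph n E" and rs: "rotation_system n E rho"
    and a: "a \<in> set (arcs n E)" and b: "b \<in> face_of rho a"
  shows "face_of rho b = face_of rho a"
proof -
  obtain k where bk: "b = (face_perm rho ^^ k) a" using b unfolding face_of_def by auto
  obtain t where t: "(face_perm rho ^^ t) b = a"
    using orbit_back[of "set (arcs n E)" "face_perm rho" a k] fp_closed[OF sg rs] fp_inj[OF sg rs] a bk by auto
  show ?thesis
  proof (rule equalityI; rule subsetI)
    fix x assume "x \<in> face_of rho b"
    then obtain j where "x = (face_perm rho ^^ j) b" unfolding face_of_def by auto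
    then have "x = (face_perm rho ^^ (j + k)) a" using bk by (simp add: funpow_add)
    then show "x \<in> face_of rho a" unfolding face_of_def by auto
  next
    fix x assume "x \<in> face_of rho a"
    then obtain j where "x = (face_perm rho ^^ j) a" unfolding face_of_def by auto
    then have "x = (face_perm rho ^^ (j + t)) b" using t by (simp add: funpow_add)
    then show "x \<in> face_of rho b" unfolding face_of_def by auto
  qed
qed

lemma self_in_face: "a \<in> face_of rho a"
  unfolding face_of_def by (auto intro: exI[of _ 0])

lemma has_nbr:
  assumes ce: "circular_embedding n E rho" and u: "u < n"
  shows "\<exists>v. E u v"
proof (rule ccontr)
  assume no: "\<not> (\<exists>v. E u v)"
  have sg: "simple_graph n E" and cg: "connected_graph n E" and ex: "\<exists>a b. E a b"
    using ce unfolding circular_embedding_def by auto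
  obtain a b where ab: "E a b" using ex by auto
  then have abn: "a < n" "b < n" "a \<noteq> b" using sg unfolding simple_graph_def by auto
  have reach: "x = u" if "E\<^sup>*\<^sup>* u x" for x
    using that by (cases rule: converse_rtranclpE) (use no in auto)
  have "a = u" "b = u" using reach cg abn u unfolding connected_graph_def by auto
  then show False using abn by simp
qed



lemma normalize_prod_entry:
  fixes X Y :: "real mat"
  assumes X: "X \<in> carrier_mat r k1" and Y: "Y \<in> carrier_mat r k2" and i: "i < k1" and j: "j < k2"
  shows "(transpose_mat (normalize_cols X) * normalize_cols Y) $$ (i,j)
    = (1 / cnorm X i) * (transpose_mat X * Y) $$ (i,j) * (1 / cnorm Y j)"
proof -
  have XX: "normalize_cols X \<in> carrier_mat r k1" and YY: "normalize_cols Y \<in> carrier_mat r k2"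
    using normalize_cols_carrier X Y by auto
  have "(transpose_mat (normalize_cols X) * normalize_cols Y) $$ (i,j)
      = (\<Sum>l\<in>{0..<r}. normalize_cols X $$ (l,i) * normalize_cols Y $$ (l,j))"
    using XX YY i j by (simp add: scalar_prod_def col_def row_def)
  also have "\<dots> = (\<Sum>l\<in>{0..<r}. (1 / cnorm X i) * (X $$ (l,i) * Y $$ (l,j)) * (1 / cnorm Y j))"
    using X Y i j by (intro sum.cong) (auto simp: normalize_cols_index)
  also have "\<dots> = (1 / cnorm X i) * (\<Sum>l\<in>{0..<r}. X $$ (l,i) * Y $$ (l,j)) * (1 / cnorm Y j)"
    by (simp only: sum_distrib_left sum_distrib_right)
  also have "(\<Sum>l\<in>{0..<r}. X $$ (l,i) * Y $$ (l,j)) = (transpose_mat X * Y) $$ (i,j)"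
    using X Y i j by (simp add: scalar_prod_def col_def row_def)
  finally show ?thesis .
qed

theorem theorem3p3:
  fixes n :: nat and E :: "nat \<Rightarrow> nat \<Rightarrow> bool" and rho :: "nat \<Rightarrow> nat \<Rightarrow> nat"
  assumes "circular_embedding n E rho"
  defines "M \<equiv> arc_face_mat n E rho"
      and "N \<equiv> arc_tail_mat n E"
      and "s \<equiv> length (faces n E rho)"
      and "m \<equiv> length (arcs n E)"
  defines "Mh \<equiv> normalize_cols M"
      and "Nh \<equiv> normalize_cols N"
      and "U \<equiv> transition_mat n E rho"
      and "C \<equiv> transpose_mat N * M"
  defines "Ch \<equiv> transpose_mat Nh * Mh"
  defines "W1 \<equiv> image_of_set Mh (mat_kernel Ch)"
      and "W2 \<equiv> image_of_set Nh (mat_kernel (transpose_mat Ch))"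
  shows "eigenspace_mat U (-1) = {x + y | x y. x \<in> W1 \<and> y \<in> W2}
         \<and> W1 \<inter> W2 = {0\<^sub>v m}
         \<and> int (subspace_dim m (eigenspace_mat U (-1))) = int n + int s - 2 * int (vec_space.rank n C)"
proof -
  note ce = assms(1)
  have sg: "simple_graph n E" and rs: "rotation_system n E rho" using ce unfolding circular_embedding_def by auto
  have Mc: "M \<in> carrier_mat m s" unfolding M_def arc_face_mat_def m_def s_def by auto
  have Nc: "N \<in> carrier_mat m n" unfolding N_def arc_tail_mat_def m_def by auto
  have Ment: "M $$ (i,j) = (if arcs n E ! i \<in> faces n E rho ! j then 1 else 0)" if "i < m" "j < s" for i j
    using that unfolding M_def arc_face_mat_def m_def s_def by auto
  have Nent: "N $$ (i,u) = (if fst (arcs n E ! i) = u then 1 else 0)" if "i < m" "u < n" for i u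
    using that unfolding N_def arc_tail_mat_def m_def by auto
  have face_ex: "\<exists>a\<in>set (arcs n E). faces n E rho ! j = face_of rho a" if "j < s" for j
  proof -
    have "faces n E rho ! j \<in> set (faces n E rho)" using that unfolding s_def by simp
    then show ?thesis unfolding faces_def by auto
  qed
  have dist: "distinct (faces n E rho)" unfolding faces_def by simp
  have orthM: "(\<Sum>i<m. M $$ (i,j) * M $$ (i,j')) = 0" if hj: "j < s" "j' < s" "j \<noteq> j'" for j j'
  proof (rule sum.neutral, rule ballI)
    fix i assume "i \<in> {..<m}"
    then have i: "i < m" by simp
    show "M $$ (i,j) * M $$ (i,j') = 0"
    proof (rule ccontr)
      assume "M $$ (i,j) * M $$ (i,j') \<noteq> 0"
      then have in1: "arcs n E ! i \<in> faces n E rho ! j" and in2: "arcs n E ! i \<in> faces n E rho ! j'"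
        using Ment i hj by (auto split: if_splits)
      obtain a where a: "a \<in> set (arcs n E)" "faces n E rho ! j = face_of rho a" using face_ex[OF hj(1)] by blast
      obtain a' where a': "a' \<in> set (arcs n E)" "faces n E rho ! j' = face_of rho a'" using face_ex[OF hj(2)] by blast
      have "faces n E rho ! j = face_of rho (arcs n E ! i)" using face_of_eq[OF sg rs a(1)] in1 a by simp
      also have "\<dots> = faces n E rho ! j'" using face_of_eq[OF sg rs a'(1)] in2 a' by simp
      finally have "j = j'" using dist hj unfolding s_def by (simp add: nth_eq_iff_index_eq)
      then show False using hj by simp
    qed
  qed
  have nzM: "cnorm M j \<noteq> 0" if hj: "j < s" for j
  proof -
    obtain a where a: "a \<in> set (arcs n E)" "faces n E rho ! j = face_of rho a" using face_ex[OF hj] by blast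
    then obtain i where i: "i < m" "arcs n E ! i = a" unfolding m_def by (metis in_set_conv_nth)
    have "M $$ (i,j) \<noteq> 0" using Ment[OF i(1) hj] i a self_in_face by simp
    then show ?thesis using cnorm_nz[OF Mc i(1)] by simp
  qed
  have orthN: "(\<Sum>i<m. N $$ (i,u) * N $$ (i,v)) = 0" if "u < n" "v < n" "u \<noteq> v" for u v
    using that by (intro sum.neutral) (auto simp: Nent)
  have nzN: "cnorm N u \<noteq> 0" if hu: "u < n" for u
  proof -
    obtain v where "E u v" using has_nbr[OF ce hu] by blast
    then have "(u,v) \<in> set (arcs n E)" using arcs_set[OF sg] by auto
    then obtain i where i: "i < m" "arcs n E ! i = (u,v)" unfolding m_def by (metis in_set_conv_nth)
    have "N $$ (i,u) \<noteq> 0" using Nent[OF i(1) hu] i by simp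
    then show ?thesis using cnorm_nz[OF Nc i(1)] by simp
  qed
  have Mhc: "Mh \<in> carrier_mat m s" unfolding Mh_def using normalize_cols_carrier[OF Mc] .
  have Nhc: "Nh \<in> carrier_mat m n" unfolding Nh_def using normalize_cols_carrier[OF Nc] .
  have MM: "transpose_mat Mh * Mh = 1\<^sub>m s" unfolding Mh_def by (rule normalize_orth[OF Mc orthM nzM])
  have NN: "transpose_mat Nh * Nh = 1\<^sub>m n" unfolding Nh_def by (rule normalize_orth[OF Nc orthN nzN])
  have Udef: "U = (2 \<cdot>\<^sub>m (Mh * transpose_mat Mh) - 1\<^sub>m m) * (2 \<cdot>\<^sub>m (Nh * transpose_mat Nh) - 1\<^sub>m m)"
    unfolding U_def transition_mat_def Let_def Mh_def Nh_def M_def N_def m_def ..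
  note main = main_abstract[OF Mhc Nhc MM NN, folded Udef Ch_def, folded W1_def W2_def]
  have Cc: "C \<in> carrier_mat n s" unfolding C_def using Mc Nc by auto
  have Chc: "Ch \<in> carrier_mat n s" unfolding Ch_def using Mhc Nhc by auto
  have ChTc: "transpose_mat Ch \<in> carrier_mat s n" using Chc by auto
  have kdC: "subspace_dim s (mat_kernel Ch) = subspace_dim s (mat_kernel C)"
  proof (rule scaled_kernel_dim[OF Cc Chc])
    fix u f assume "u < n" "f < s"
    then show "Ch $$ (u,f) = (1 / cnorm N u) * C $$ (u,f) * (1 / cnorm M f)"
      unfolding Ch_def C_def Nh_def Mh_def by (rule normalize_prod_entry[OF Nc Mc])
  qed (use nzN nzM in auto)
  have r1: "vec_space.rank n C = subspace_dim n ((\<lambda>x. C *\<^sub>v x) ` carrier_vec s)" by (rule rank_img[OF Cc])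
  have r2: "subspace_dim n ((\<lambda>x. C *\<^sub>v x) ` carrier_vec s) + subspace_dim s (mat_kernel C) = s" by (rule img_ker[OF Cc])
  have r3: "subspace_dim n ((\<lambda>x. Ch *\<^sub>v x) ` carrier_vec s) + subspace_dim s (mat_kernel Ch) = s" by (rule img_ker[OF Chc])
  have r4: "subspace_dim s ((\<lambda>x. transpose_mat Ch *\<^sub>v x) ` carrier_vec n) + subspace_dim n (mat_kernel (transpose_mat Ch)) = n"
    by (rule img_ker[OF ChTc])
  have r5: "subspace_dim n ((\<lambda>x. Ch *\<^sub>v x) ` carrier_vec s) = subspace_dim s ((\<lambda>x. transpose_mat Ch *\<^sub>v x) ` carrier_vec n)"
    by (rule img_transpose_eq[OF Chc])
  have dimE: "subspace_dim m (eigenspace_mat U (-1)) = subspace_dim s (mat_kernel Ch) + subspace_dim n (mat_kernel (transpose_mat Ch))"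
    using main by blast
  have "int (subspace_dim m (eigenspace_mat U (-1))) = int n + int s - 2 * int (vec_space.rank n C)"
    using dimE r1 r2 r3 r4 r5 kdC by linarith
  then show ?thesis using main by blast
qed



end
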